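(* Let $g(n) = \frac{(\log n)^2}{n} f(n)$ and \[ M = \limsup_{t\to\infty} \max_{1 \le s \le t} \frac{\log(R(s,t))}{\sqrt{st}}. \] Then $\limsup_{n\to\infty} g(n) \le M^2$.
   Context: All logarithms are in base 2. For positive integers $s,t$, the Ramsey number $R(s,t)$ is the minimum $n$ such that every red/blue edge-coloring of the complete graph $K_n$ contains a red clique on $s$ vertices or a blue clique on $t$ vertices. For a graph $G$, $\chi(G)$ is its chromatic number and $\omega(G)$ its clique number. For $n \in \mathbb{N}$, $f(n)$ is the maximum of $\chi(G)/\omega(G)$ over all graphs $G$ on $n$ vertices. *)

theory Defs
  imports "HOL-Analysis.Analysis"
begin

text \<open>A simple graph (resp. a red/blue colouring of K_n) on vertex set {0..<n} is given by
  a predicate E on 2-element sets: the doubleton {u,v} (u \<noteq> v) is an edge (resp. red) iff E {u,v}.\<close>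

definition is_clique :: "(nat set \<Rightarrow> bool) \<Rightarrow> nat set \<Rightarrow> bool" where
  "is_clique E S \<longleftrightarrow> (\<forall>x\<in>S. \<forall>y\<in>S. x \<noteq> y \<longrightarrow> E {x, y})"

definition ramsey :: "nat \<Rightarrow> nat \<Rightarrow> nat" where
  "ramsey s t = (LEAST n. \<forall>E :: nat set \<Rightarrow> bool. \<exists>S. S \<subseteq> {0..<n} \<and>
      ((card S = s \<and> is_clique E S) \<or> (card S = t \<and> is_clique (\<lambda>e. \<not> E e) S)))"

definition clique_number :: "nat \<Rightarrow> (nat set \<Rightarrow> bool) \<Rightarrow> nat" where
  "clique_number n E = Max {card S | S. S \<subseteq> {0..<n} \<and> is_clique E S}"

definition chromatic_number :: "nat \<Rightarrow> (nat set \<Rightarrow> bool) \<Rightarrow> nat" where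
  "chromatic_number n E = (LEAST k. \<exists>c :: nat \<Rightarrow> nat. (\<forall>v<n. c v < k) \<and>
      (\<forall>u<n. \<forall>v<n. u \<noteq> v \<longrightarrow> E {u, v} \<longrightarrow> c u \<noteq> c v))"

definition f_ratio :: "nat \<Rightarrow> real" where
  "f_ratio n = Max {real (chromatic_number n E) / real (clique_number n E) | E. True}"

definition g_fun :: "nat \<Rightarrow> real" where
  "g_fun n = (log 2 (real n))\<^sup>2 / real n * f_ratio n"

definition M_const :: ereal where
  "M_const = limsup (\<lambda>t. ereal (Max ((\<lambda>s. log 2 (real (ramsey s t)) / sqrt (real s * real t)) ` {1..t})))"

end

theory Submission
  imports Defs "HOL-Real_Asymp.Real_Asymp"
begin

lemma clique_single: "is_clique E {v}"
  by (simp add: is_clique_def)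

lemma clique_insert:
  assumes "is_clique E S" "\<And>u. u \<in> S \<Longrightarrow> u \<noteq> v \<Longrightarrow> E {v, u}"
  shows "is_clique E (insert v S)"
  using assms unfolding is_clique_def by (metis insert_commute insert_iff)

lemma ES:
  "finite V \<Longrightarrow> card V \<ge> (a + b) choose a \<Longrightarrow>
   \<exists>S\<subseteq>V. (card S = Suc a \<and> is_clique E S) \<or> (card S = Suc b \<and> is_clique (\<lambda>e. \<not> E e) S)"
proof (induction a arbitrary: b V)
  case 0
  then have "V \<noteq> {}" by auto
  then obtain v where "v \<in> V" by auto
  then show ?case by (intro exI[of _ "{v}"]) (auto simp: clique_single)
next
  case (Suc a)
  note IHa = Suc.IH
  show ?case using Suc.prems
  proof (induction b arbitrary: V)
    case 0
    then have "V \<noteq> {}" by auto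
    then obtain v where "v \<in> V" by auto
    then show ?case by (intro exI[of _ "{v}"]) (auto simp: clique_single)
  next
    case (Suc b)
    have fin: "finite V" by fact
    have eq: "((Suc a + Suc b) choose (Suc a)) = ((a + Suc b) choose a) + ((Suc a + b) choose (Suc a))"
      by simp
    have pos: "((a + Suc b) choose a) \<ge> 1"
      by (metis One_nat_def Suc_leI le_add1 zero_less_binomial_iff)
    with Suc.prems eq have "V \<noteq> {}" by auto
    then obtain v where v: "v \<in> V" by auto
    define N where "N = {u \<in> V - {v}. E {v, u}}"
    define N' where "N' = {u \<in> V - {v}. \<not> E {v, u}}"
    have finN: "finite N" "finite N'" using fin by (auto simp: N_def N'_def)
    have "N \<union> N' = V - {v}" "N \<inter> N' = {}" by (auto simp: N_def N'_def)
    then have "card N + card N' = card V - 1"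
      using card_Un_disjoint[OF finN] fin v by (metis card_Diff_singleton)
    then have "card N \<ge> (a + Suc b) choose a \<or> card N' \<ge> (Suc a + b) choose (Suc a)"
      using Suc.prems eq pos by linarith
    then show ?case
    proof
      assume "card N \<ge> (a + Suc b) choose a"
      from IHa[OF finN(1) this] obtain S where S: "S \<subseteq> N"
        "(card S = Suc a \<and> is_clique E S) \<or> (card S = Suc (Suc b) \<and> is_clique (\<lambda>e. \<not> E e) S)" by blast
      show ?thesis
      proof (cases "card S = Suc a \<and> is_clique E S")
        case True
        have vS: "v \<notin> S" using S(1) by (auto simp: N_def)
        have "finite S" using S(1) finN(1) finite_subset by blast
        then have "card (insert v S) = Suc (Suc a)" using True vS by simp
        moreover have "is_clique E (insert v S)"
          using True S(1) by (intro clique_insert) (auto simp: N_def)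
        moreover have "insert v S \<subseteq> V" using S(1) v by (auto simp: N_def)
        ultimately show ?thesis by blast
      next
        case False
        then show ?thesis using S by (intro exI[of _ S]) (auto simp: N_def)
      qed
    next
      assume "card N' \<ge> (Suc a + b) choose (Suc a)"
      from Suc.IH[OF finN(2) this] obtain S where S: "S \<subseteq> N'"
        "(card S = Suc (Suc a) \<and> is_clique E S) \<or> (card S = Suc b \<and> is_clique (\<lambda>e. \<not> E e) S)" by blast
      show ?thesis
      proof (cases "card S = Suc b \<and> is_clique (\<lambda>e. \<not> E e) S")
        case True
        have vS: "v \<notin> S" using S(1) by (auto simp: N'_def)
        have "finite S" using S(1) finN(2) finite_subset by blast
        then have "card (insert v S) = Suc (Suc b)" using True vS by simp
        moreover have "is_clique (\<lambda>e. \<not> E e) (insert v S)"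
          using True S(1) by (intro clique_insert) (auto simp: N'_def)
        moreover have "insert v S \<subseteq> V" using S(1) v by (auto simp: N'_def)
        ultimately show ?thesis by blast
      next
        case False
        then show ?thesis using S by (intro exI[of _ S]) (auto simp: N'_def)
      qed
    qed
  qed
qed

lemma clique_image:
  assumes "is_clique (\<lambda>e. E (h ` e)) S" "inj_on h S"
  shows "is_clique E (h ` S)"
  using assms unfolding is_clique_def inj_on_def by auto

lemma transfer_prop:
  assumes P: "\<forall>E :: nat set \<Rightarrow> bool. \<exists>S. S \<subseteq> {0..<m} \<and>
      ((card S = s \<and> is_clique E S) \<or> (card S = t \<and> is_clique (\<lambda>e. \<not> E e) S))"
    and fin: "finite V" and cV: "card V \<ge> m"
  shows "\<exists>S\<subseteq>V. (card S = s \<and> is_clique E S) \<or> (card S = t \<and> is_clique (\<lambda>e. \<not> E e) S)"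
proof -
  obtain h where h: "bij_betw h {0..<card V} V" using ex_bij_betw_nat_finite[OF fin] by blast
  from spec[OF P, of "\<lambda>e. E (h ` e)"] obtain S where S: "S \<subseteq> {0..<m}"
    "(card S = s \<and> is_clique (\<lambda>e. E (h ` e)) S) \<or> (card S = t \<and> is_clique (\<lambda>e. \<not> E (h ` e)) S)"
    by blast
  have sub: "S \<subseteq> {0..<card V}" using S(1) cV by auto
  have inj: "inj_on h S" using inj_on_subset[OF bij_betw_imp_inj_on[OF h] sub] .
  have T: "h ` S \<subseteq> V" using image_mono[OF sub, of h] bij_betw_imp_surj_on[OF h] by simp
  have cT: "card (h ` S) = card S" using card_image[OF inj] .
  show ?thesis
  proof (cases "card S = s \<and> is_clique (\<lambda>e. E (h ` e)) S")
    case True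
    have "is_clique E (h ` S)" using clique_image[OF _ inj, of E] True by blast
    then show ?thesis using T cT True by (intro exI[of _ "h ` S"]) simp
  next
    case False
    then have "card S = t \<and> is_clique (\<lambda>e. \<not> E (h ` e)) S" using S by blast
    then have "card S = t" "is_clique (\<lambda>e. \<not> E e) (h ` S)"
      using clique_image[OF _ inj, of "\<lambda>e. \<not> E e"] by auto
    then show ?thesis using T cT by (intro exI[of _ "h ` S"]) simp
  qed
qed

lemma ramsey_prop:
  assumes "s \<ge> 1" "t \<ge> 1"
  shows "ramsey s t \<le> (s + t - 2) choose (s - 1)"
    and "finite V \<Longrightarrow> card V \<ge> ramsey s t \<Longrightarrow>
      \<exists>S\<subseteq>V. (card S = s \<and> is_clique E S) \<or> (card S = t \<and> is_clique (\<lambda>e. \<not> E e) S)"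
proof -
  define a where "a = s - 1"
  define b where "b = t - 1"
  have ab: "s = Suc a" "t = Suc b" using assms by (auto simp: a_def b_def)
  define P where "P = (\<lambda>n. \<forall>E :: nat set \<Rightarrow> bool. \<exists>S. S \<subseteq> {0..<n} \<and>
      ((card S = s \<and> is_clique E S) \<or> (card S = t \<and> is_clique (\<lambda>e. \<not> E e) S)))"
  have e: "(s + t - 2) choose (s - 1) = (a + b) choose a" using ab by simp
  have PC: "P ((s + t - 2) choose (s - 1))"
    unfolding P_def e
  proof
    fix E :: "nat set \<Rightarrow> bool"
    have "\<exists>S\<subseteq>{0..<(a+b) choose a}. (card S = Suc a \<and> is_clique E S) \<or> (card S = Suc b \<and> is_clique (\<lambda>e. \<not> E e) S)"
      by (rule ES) auto
    then show "\<exists>S. S \<subseteq> {0..<(a+b) choose a} \<and> ((card S = s \<and> is_clique E S) \<or> (card S = t \<and> is_clique (\<lambda>e. \<not> E e) S))"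
      using ab by blast
  qed
  have r: "ramsey s t = (LEAST n. P n)" unfolding ramsey_def P_def by simp
  show "ramsey s t \<le> (s + t - 2) choose (s - 1)" unfolding r using PC by (rule Least_le)
  have "P (ramsey s t)" unfolding r using PC by (rule LeastI)
  then show "finite V \<Longrightarrow> card V \<ge> ramsey s t \<Longrightarrow>
      \<exists>S\<subseteq>V. (card S = s \<and> is_clique E S) \<or> (card S = t \<and> is_clique (\<lambda>e. \<not> E e) S)"
    unfolding P_def by (rule transfer_prop)
qed

lemma coloring:
  assumes t: "t \<ge> 1"
    and H: "\<And>V. V \<subseteq> {0..<n} \<Longrightarrow> card V \<ge> m \<Longrightarrow> \<exists>S\<subseteq>V. card S = t \<and> is_clique (\<lambda>e. \<not> E e) S"
  shows "V \<subseteq> {0..<n} \<Longrightarrow> \<exists>c::nat\<Rightarrow>nat. (\<forall>v\<in>V. c v < card V div t + m) \<and>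
      (\<forall>u\<in>V. \<forall>v\<in>V. u \<noteq> v \<longrightarrow> E {u, v} \<longrightarrow> c u \<noteq> c v)"
proof (induction "card V" arbitrary: V rule: less_induct)
  case less
  have finV: "finite V" using less.prems finite_subset by blast
  show ?case
  proof (cases "card V < m")
    case True
    obtain h where h: "bij_betw h V {0..<card V}" using ex_bij_betw_finite_nat[OF finV] by blast
    show ?thesis
    proof (intro exI[of _ h] conjI ballI impI)
      fix v assume "v \<in> V"
      then have "h v < card V" using bij_betwE[OF h] by simp
      then show "h v < card V div t + m" using True by linarith
    next
      fix u v assume "u \<in> V" "v \<in> V" "u \<noteq> v"
      then show "h u \<noteq> h v" using bij_betw_imp_inj_on[OF h] by (meson inj_on_def)
    qed
  next
    case False
    then have mV: "m \<le> card V" by simp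
    obtain S where S: "S \<subseteq> V" "card S = t" "is_clique (\<lambda>e. \<not> E e) S"
      using H[OF less.prems mV] by blast
    have finS: "finite S" using S(1) finV finite_subset by blast
    have cD: "card (V - S) = card V - t" using S finS by (simp add: card_Diff_subset)
    have tV: "t \<le> card V" using card_mono[OF finV S(1)] S(2) by simp
    have lt: "card (V - S) < card V" using cD t tV by linarith
    have sub': "V - S \<subseteq> {0..<n}" using less.prems by blast
    obtain c where c: "\<forall>v\<in>V - S. c v < card (V - S) div t + m"
      "\<forall>u\<in>V - S. \<forall>v\<in>V - S. u \<noteq> v \<longrightarrow> E {u, v} \<longrightarrow> c u \<noteq> c v"
      using less.hyps[OF lt sub'] by blast
    have dv: "card V div t = card (V - S) div t + 1"
    proof -
      have "card V = card (V - S) + t" using cD tV by simp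
      then show ?thesis using t by simp
    qed
    define c' where "c' = (\<lambda>v. if v \<in> S then card (V - S) div t + m else c v)"
    show ?thesis
    proof (intro exI[of _ c'] conjI ballI impI)
      fix v assume "v \<in> V"
      then show "c' v < card V div t + m" using c(1) dv by (auto simp: c'_def) (meson DiffI less_SucI)
    next
      fix u v assume uv: "u \<in> V" "v \<in> V" "u \<noteq> v" "E {u, v}"
      show "c' u \<noteq> c' v"
      proof (cases "u \<in> S")
        case True
        show ?thesis
        proof (cases "v \<in> S")
          case True
          then show ?thesis using S(3) uv \<open>u \<in> S\<close> unfolding is_clique_def by blast
        next
          case False
          then show ?thesis using True c(1) uv by (auto simp: c'_def)
        qed
      next
        case False
        show ?thesis
        proof (cases "v \<in> S")
          case True
          have "c u < card (V - S) div t + m" using c(1) uv(1) False by blast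
          then show ?thesis using True False by (simp add: c'_def)
        next
          case F2: False
          then show ?thesis using False c(2) uv by (auto simp: c'_def)
        qed
      qed
    qed
  qed
qed

lemma chrom_le:
  assumes "\<exists>c::nat\<Rightarrow>nat. (\<forall>v<n. c v < k) \<and> (\<forall>u<n. \<forall>v<n. u \<noteq> v \<longrightarrow> E {u, v} \<longrightarrow> c u \<noteq> c v)"
  shows "chromatic_number n E \<le> k"
  unfolding chromatic_number_def using assms by (rule Least_le)

lemma chrom_le_n: "chromatic_number n E \<le> n"
  by (rule chrom_le) (intro exI[of _ id], auto)

lemma chrom_le_col:
  assumes "t \<ge> 1"
    and H: "\<And>V. V \<subseteq> {0..<n} \<Longrightarrow> card V \<ge> m \<Longrightarrow> \<exists>S\<subseteq>V. card S = t \<and> is_clique (\<lambda>e. \<not> E e) S"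
  shows "chromatic_number n E \<le> n div t + m"
proof -
  obtain c where c: "\<forall>v\<in>{0..<n}. c v < card {0..<n} div t + m"
      "\<forall>u\<in>{0..<n}. \<forall>v\<in>{0..<n}. u \<noteq> v \<longrightarrow> E {u, v} \<longrightarrow> c u \<noteq> c v"
    using coloring[where V="{0..<n}", OF assms] by blast
  show ?thesis by (rule chrom_le) (intro exI[of _ c], use c in auto)
qed

lemma clique_set_fin: "finite {card S | S. S \<subseteq> {0..<n} \<and> is_clique E S}"
proof -
  have "{card S | S. S \<subseteq> {0..<n} \<and> is_clique E S} \<subseteq> {0..n}"
  proof
    fix x assume "x \<in> {card S | S. S \<subseteq> {0..<n} \<and> is_clique E S}"
    then obtain S where "x = card S" "S \<subseteq> {0..<n}" by blast
    then have "x \<le> card {0..<n}" using card_mono[of "{0..<n}" S] by simp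
    then show "x \<in> {0..n}" by simp
  qed
  then show ?thesis using finite_subset by blast
qed

lemma clique_le:
  assumes "S \<subseteq> {0..<n}" "is_clique E S"
  shows "card S \<le> clique_number n E"
  unfolding clique_number_def using assms clique_set_fin by (intro Max_ge) auto

lemma clique_number_le: "clique_number n E \<le> n"
proof -
  have "{} \<subseteq> {0..<n} \<and> is_clique E {}" by (simp add: is_clique_def)
  then have ne: "{card S | S. S \<subseteq> {0..<n} \<and> is_clique E S} \<noteq> {}" by blast
  show ?thesis unfolding clique_number_def using clique_set_fin ne
    by (subst Max_le_iff) (auto dest: card_mono[rotated])
qed

lemma clique_number_pos: "n \<ge> 1 \<Longrightarrow> clique_number n E \<ge> 1"
  using clique_le[of "{0}" n E] by (simp add: is_clique_def)

lemma f_ratio_le: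
  assumes "\<And>E. real (chromatic_number n E) / real (clique_number n E) \<le> B"
  shows "f_ratio n \<le> B"
proof -
  let ?A = "{real (chromatic_number n E) / real (clique_number n E) | E. True}"
  have "?A \<subseteq> (\<lambda>(a, b). real a / real b) ` ({0..n} \<times> {0..n})"
  proof
    fix x assume "x \<in> ?A"
    then obtain E where "x = real (chromatic_number n E) / real (clique_number n E)" by blast
    moreover have "(chromatic_number n E, clique_number n E) \<in> {0..n} \<times> {0..n}"
      using chrom_le_n clique_number_le by simp
    ultimately show "x \<in> (\<lambda>(a, b). real a / real b) ` ({0..n} \<times> {0..n})"
      by (metis (no_types, lifting) case_prod_conv image_eqI)
  qed
  then have "finite ?A" using finite_subset by blast
  moreover have "?A \<noteq> {}" by blast
  ultimately show ?thesis unfolding f_ratio_def using assms by (subst Max_le_iff) auto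
qed



lemma pow_bound: "0 < x \<Longrightarrow> log 2 y \<le> c * log 2 x \<Longrightarrow> 0 < (y::real) \<Longrightarrow> y \<le> x powr c"
proof -
  assume h: "0 < x" "log 2 y \<le> c * log 2 x" "0 < y"
  have "y = 2 powr (log 2 y)" using h by simp
  also have "\<dots> \<le> 2 powr (c * log 2 x)" using h by (intro powr_mono) auto
  also have "\<dots> = (2 powr (log 2 x)) powr c" by (simp add: powr_powr mult.commute)
  also have "\<dots> = x powr c" using h by simp
  finally show ?thesis .
qed

lemma main_bound:
  fixes a a' :: real and K T0 n :: nat
  assumes a: "0 < a" and a': "0 < a'" and K: "T0 \<le> K" "1 \<le> K"
    and HM: "\<And>s t. T0 \<le> t \<Longrightarrow> 1 \<le> s \<Longrightarrow> s \<le> t \<Longrightarrow>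
        log 2 (real (ramsey s t)) \<le> a * sqrt (real s * real t)"
    and n: "2 \<le> n"
  shows "f_ratio n \<le> a'^2 * real n / (log 2 (real n))^2 +
     (((log 2 (real n))^2 / a'^2 + real K + 2) ^ K + real n powr (a * (1 + 1 / real K) / a'))"
proof -
  define l where "l = log 2 (real n)"
  have l1: "1 \<le> l" using n by (simp add: l_def)
  define c where "c = a * (1 + 1 / real K) / a'"
  define B1 where "B1 = (l^2 / a'^2 + real K + 2) ^ K"
  define B2 where "B2 = real n powr c"
  have B1: "0 \<le> B1" unfolding B1_def using a' by (intro zero_le_power) (simp add: add_nonneg_nonneg)
  have B2: "0 \<le> B2" unfolding B2_def by simp
  have npos: "0 < real n" using n by simp
  have "f_ratio n \<le> a'^2 * real n / l^2 + (B1 + B2)"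
  proof (rule f_ratio_le)
    fix E
    define k where "k = clique_number n E"
    have k1: "1 \<le> k" unfolding k_def using n clique_number_pos by simp
    have cl: "\<And>S. S \<subseteq> {0..<n} \<Longrightarrow> is_clique E S \<Longrightarrow> card S \<le> k"
      unfolding k_def by (rule clique_le)
    have "real (chromatic_number n E) / real k \<le> a'^2 * real n / l^2 + (B1 + B2)"
    proof (cases "l^2 \<le> a'^2 * real k")
      case True
      have "real (chromatic_number n E) / real k \<le> real n / real k"
        using chrom_le_n[of n E] k1 by (intro divide_right_mono) auto
      also have "\<dots> \<le> a'^2 * real n / l^2"
      proof -
        have "real n * l^2 \<le> real n * (a'^2 * real k)" using True npos by (intro mult_left_mono) auto
        then show ?thesis using k1 l1 by (simp add: field_simps)
      qed
      finally show ?thesis using B1 B2 by linarith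
    next
      case False
      define X where "X = l^2 / (a'^2 * real k)"
      have kpos: "0 < real k" using k1 by simp
      have Xk: "X * real k = l^2 / a'^2" unfolding X_def using kpos by (simp add: field_simps)
      have X1: "1 < X" unfolding X_def using False a' kpos by (simp add: field_simps)
      have Xle: "X \<le> l^2 / a'^2"
      proof -
        have "a'^2 * 1 \<le> a'^2 * real k" using k1 by (intro mult_left_mono) auto
        then have "a'^2 \<le> a'^2 * real k" by simp
        moreover have "0 < a'^2 * a'^2" using a' by simp
        ultimately show ?thesis unfolding X_def using l1 by (intro divide_left_mono) auto
      qed
      define t where "t = nat \<lceil>X\<rceil>"
      have tX: "X \<le> real t" "real t < X + 1" unfolding t_def using X1 by linarith+
      have t1: "1 \<le> t" using tX X1 by linarith
      have "X * real k \<le> real t * real k" using tX(1) kpos by (intro mult_right_mono) auto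
      then have tk: "l^2 / a'^2 \<le> real t * real k" using Xk by simp
      have G1: "\<And>V. V \<subseteq> {0..<n} \<Longrightarrow> ramsey (k+1) t \<le> card V \<Longrightarrow> \<exists>S\<subseteq>V. card S = t \<and> is_clique (\<lambda>e. \<not> E e) S"
      proof -
        fix V assume V: "V \<subseteq> {0..<n}" "ramsey (k+1) t \<le> card V"
        have "finite V" using V finite_subset by blast
        from ramsey_prop(2)[of "k+1" t V E, OF _ t1 this V(2)] obtain S where
          S: "S \<subseteq> V" "(card S = k+1 \<and> is_clique E S) \<or> (card S = t \<and> is_clique (\<lambda>e. \<not> E e) S)" by auto
        have "S \<subseteq> {0..<n}" using S(1) V(1) by (rule subset_trans)
        then have "\<not> (card S = k+1 \<and> is_clique E S)" using cl[of S] by auto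
        then show "\<exists>S\<subseteq>V. card S = t \<and> is_clique (\<lambda>e. \<not> E e) S" using S by blast
      qed
      have G2: "\<And>V. V \<subseteq> {0..<n} \<Longrightarrow> ramsey t (k+1) \<le> card V \<Longrightarrow> \<exists>S\<subseteq>V. card S = t \<and> is_clique (\<lambda>e. \<not> E e) S"
      proof -
        fix V assume V: "V \<subseteq> {0..<n}" "ramsey t (k+1) \<le> card V"
        have "finite V" using V finite_subset by blast
        from ramsey_prop(2)[of t "k+1" V "\<lambda>e. \<not> E e", OF t1 _ this V(2)] obtain S where
          S: "S \<subseteq> V" "(card S = t \<and> is_clique (\<lambda>e. \<not> E e) S) \<or> (card S = k+1 \<and> is_clique E S)" by auto
        have "S \<subseteq> {0..<n}" using S(1) V(1) by (rule subset_trans)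
        then have "\<not> (card S = k+1 \<and> is_clique E S)" using cl[of S] by auto
        then show "\<exists>S\<subseteq>V. card S = t \<and> is_clique (\<lambda>e. \<not> E e) S" using S by blast
      qed
      have "\<exists>m. (\<forall>V. V \<subseteq> {0..<n} \<longrightarrow> m \<le> card V \<longrightarrow> (\<exists>S\<subseteq>V. card S = t \<and> is_clique (\<lambda>e. \<not> E e) S))
             \<and> real m \<le> B1 + B2"
      proof (cases "k \<le> K \<or> t \<le> K")
        case True
        have r1: "ramsey (k+1) t \<le> (k + t - 1) choose k"
          using ramsey_prop(1)[of "k+1" t] t1 by simp
        have kt1: "1 \<le> k + t" using k1 by simp
        have r2: "(k + t - 1) choose k \<le> (k + t) ^ K"
        proof (cases "k \<le> K")
          case True
          have "(k + t - 1) choose k \<le> (k + t - 1) ^ k" using t1 by (intro binomial_le_pow) simp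
          also have "\<dots> \<le> (k + t) ^ k" by (intro power_mono) auto
          also have "\<dots> \<le> (k + t) ^ K" using True kt1 by (intro power_increasing) auto
          finally show ?thesis .
        next
          case False
          then have tK: "t \<le> K" using \<open>k \<le> K \<or> t \<le> K\<close> by simp
          have "(k + t - 1) choose k = (k + t - 1) choose (t - 1)"
            using t1 by (subst binomial_symmetric) auto
          also have "\<dots> \<le> (k + t - 1) ^ (t - 1)" using t1 by (intro binomial_le_pow) simp
          also have "\<dots> \<le> (k + t) ^ (t - 1)" by (intro power_mono) auto
          also have "\<dots> \<le> (k + t) ^ K" using tK kt1 by (intro power_increasing) auto
          finally show ?thesis .
        qed
        have kt: "real (k + t) \<le> l^2 / a'^2 + real K + 2"
        proof (cases "k \<le> K")
          case True
          then show ?thesis using tX(2) Xle by simp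
        next
          case False
          then have tK: "t \<le> K" using \<open>k \<le> K \<or> t \<le> K\<close> by simp
          have "real k < l^2 / a'^2" using False \<open>\<not> l^2 \<le> a'^2 * real k\<close> a'
            by (simp add: field_simps)
          then show ?thesis using tK by simp
        qed
        have "real (ramsey (k+1) t) \<le> real ((k + t) ^ K)" using r1 r2 by linarith
        also have "\<dots> = real (k + t) ^ K" by simp
        also have "\<dots> \<le> B1" unfolding B1_def using kt by (intro power_mono) auto
        finally have "real (ramsey (k+1) t) \<le> B1 + B2" using B2 by linarith
        then show ?thesis using G1 by blast
      next
        case False
        then have kK: "K < k" and tK: "K < t" by auto
        have Kpos: "0 < real K" using K by simp
        have ke: "real (k + 1) \<le> (1 + 1 / real K) * real k"
        proof -
          have "1 \<le> real k / real K" using kK Kpos by (simp add: field_simps)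
          then show ?thesis by (simp add: field_simps)
        qed
        have te: "real t \<le> (1 + 1 / real K) * X"
        proof -
          have "real K \<le> X" using tX(2) tK by linarith
          then have "1 \<le> X / real K" using Kpos by (simp add: field_simps)
          then show ?thesis using tX(2) by (simp add: field_simps)
        qed
        have prod: "real (k + 1) * real t \<le> ((1 + 1 / real K) * l / a')^2"
        proof -
          have "real (k + 1) * real t \<le> ((1 + 1 / real K) * real k) * ((1 + 1 / real K) * X)"
            using ke te by (intro mult_mono) auto
          also have "\<dots> = (1 + 1 / real K)^2 * (X * real k)" by (simp add: power2_eq_square)
          also have "\<dots> = ((1 + 1 / real K) * l / a')^2" using Xk by (simp add: power_divide power_mult_distrib)
          finally show ?thesis .
        qed
        have sq: "sqrt (real (k + 1) * real t) \<le> (1 + 1 / real K) * l / a'"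
        proof -
          have "sqrt (real (k + 1) * real t) \<le> sqrt (((1 + 1 / real K) * l / a')^2)"
            using prod by (rule real_sqrt_le_mono)
          also have "\<dots> = (1 + 1 / real K) * l / a'" using l1 a' Kpos by simp
          finally show ?thesis .
        qed
        have cl_eq: "a * ((1 + 1 / real K) * l / a') = c * l" unfolding c_def by simp
        have "\<exists>m. (\<forall>V. V \<subseteq> {0..<n} \<longrightarrow> m \<le> card V \<longrightarrow> (\<exists>S\<subseteq>V. card S = t \<and> is_clique (\<lambda>e. \<not> E e) S))
             \<and> log 2 (real m) \<le> c * l"
        proof (cases "k + 1 \<le> t")
          case True
          have "log 2 (real (ramsey (k+1) t)) \<le> a * sqrt (real (k + 1) * real t)"
            using HM[of t "k+1"] True tK K by simp
          also have "\<dots> \<le> c * l" using mult_left_mono[OF sq, of a] a cl_eq by simp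
          finally show ?thesis using G1 by blast
        next
          case False
          have "log 2 (real (ramsey t (k+1))) \<le> a * sqrt (real t * real (k + 1))"
            using HM[of "k+1" t] False t1 kK K by simp
          also have "\<dots> = a * sqrt (real (k + 1) * real t)" by (simp add: mult.commute)
          also have "\<dots> \<le> c * l" using mult_left_mono[OF sq, of a] a cl_eq by simp
          finally show ?thesis using G2 by blast
        qed
        then obtain m where m: "\<forall>V. V \<subseteq> {0..<n} \<longrightarrow> m \<le> card V \<longrightarrow> (\<exists>S\<subseteq>V. card S = t \<and> is_clique (\<lambda>e. \<not> E e) S)"
          "log 2 (real m) \<le> c * l" by blast
        have "real m \<le> B2"
        proof (cases "m = 0")
          case True then show ?thesis using B2 by simp
        next
          case False
          then show ?thesis unfolding B2_def using pow_bound[of "real n" "real m" c] m(2) npos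
            by (simp add: l_def)
        qed
        then show ?thesis using m(1) B1 by (intro exI[of _ m]) auto
      qed
      then obtain m where m: "\<And>V. V \<subseteq> {0..<n} \<Longrightarrow> m \<le> card V \<Longrightarrow> (\<exists>S\<subseteq>V. card S = t \<and> is_clique (\<lambda>e. \<not> E e) S)"
          "real m \<le> B1 + B2" by blast
      have chi: "chromatic_number n E \<le> n div t + m" using t1 m(1) by (rule chrom_le_col)
      have "real (chromatic_number n E) \<le> real n / real t + real m"
      proof -
        have "real (chromatic_number n E) \<le> real (n div t) + real m" using chi by linarith
        moreover have "real (n div t) \<le> real n / real t" by (rule of_nat_div_le_of_nat)
        ultimately show ?thesis by linarith
      qed
      then have "real (chromatic_number n E) / real k \<le> (real n / real t + real m) / real k"
        using kpos by (intro divide_right_mono) auto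
      also have "\<dots> = real n / (real t * real k) + real m / real k" using kpos t1 by (simp add: field_simps)
      also have "\<dots> \<le> a'^2 * real n / l^2 + (B1 + B2)"
      proof -
        have lpos: "0 < l^2 / a'^2" using l1 a' by simp
        have "real n / (real t * real k) \<le> real n / (l^2 / a'^2)"
        proof (rule divide_left_mono)
          have "0 < real t * real k" using kpos t1 by simp
          then show "0 < real t * real k * (l^2 / a'^2)" using lpos by (rule mult_pos_pos)
        qed (use tk npos in auto)
        also have "\<dots> = a'^2 * real n / l^2" by simp
        finally have 1: "real n / (real t * real k) \<le> a'^2 * real n / l^2" .
        have "real m / real k \<le> real m" using k1 by (simp add: divide_le_eq mult_le_cancel_left1) 
        then show ?thesis using 1 m(2) by linarith
      qed
      finally show ?thesis .
    qed
    then show "real (chromatic_number n E) / real (clique_number n E) \<le> a'^2 * real n / l^2 + (B1 + B2)"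
      by (simp add: k_def)
  qed
  then show ?thesis unfolding l_def B1_def B2_def c_def by simp
qed


lemma log_nat_nonneg: "0 \<le> log 2 (real m)"
proof (cases "m = 0")
  case True then show ?thesis by (simp add: log_def)
next
  case False then show ?thesis by simp
qed

theorem theorem2p2:
  shows "limsup (\<lambda>n. ereal (g_fun n)) \<le> M_const ^ 2"
proof -
  define tm where "tm = (\<lambda>t s. log 2 (real (ramsey s t)) / sqrt (real s * real t))"
  define F where "F = (\<lambda>t::nat. ereal (Max (tm t ` {1..t})))"
  have Mdef: "M_const = limsup F" unfolding M_const_def F_def tm_def ..
  have tm0: "\<And>s t. 0 \<le> tm t s" unfolding tm_def using log_nat_nonneg by simp
  have tmle: "\<And>s t. 1 \<le> s \<Longrightarrow> s \<le> t \<Longrightarrow> tm t s \<le> Max (tm t ` {1..t})"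
    by (rule Max_ge) auto
  have M0: "0 \<le> M_const"
    unfolding Mdef
  proof (rule le_Limsup)
    show "\<forall>\<^sub>F t in sequentially. 0 \<le> F t"
    proof (rule eventually_sequentiallyI[of 1])
      fix t :: nat assume "1 \<le> t"
      then have "0 \<le> Max (tm t ` {1..t})" using tm0[of t 1] tmle[of 1 t] by linarith
      then show "0 \<le> F t" unfolding F_def by simp
    qed
  qed simp
  show ?thesis
  proof (cases M_const)
    case PInf then show ?thesis by simp
  next
    case MInf with M0 show ?thesis by simp
  next
    case (real L)
    have L0: "0 \<le> L" using M0[unfolded real] by (simp only: ereal_less_eq)
    have sq: "M_const ^ 2 = ereal (L^2)" by (simp add: real power2_eq_square)
    show ?thesis unfolding sq
    proof (rule ereal_le_epsilon2)
      fix \<epsilon> :: real assume \<epsilon>: "0 < \<epsilon>"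
      define \<eta> where "\<eta> = min 1 (\<epsilon> / (6 * (L+2)^2))"
      have L2: "0 < (L+2)^2" using L0 by simp
      have \<eta>0: "0 < \<eta>" unfolding \<eta>_def using \<epsilon> L2 by simp
      have \<eta>1: "\<eta> \<le> 1" unfolding \<eta>_def by simp
      have \<eta>\<epsilon>: "\<eta> * (6 * (L+2)^2) \<le> \<epsilon>"
      proof -
        have "\<eta> \<le> \<epsilon> / (6 * (L+2)^2)" unfolding \<eta>_def by simp
        then show ?thesis using L2 by (simp add: field_simps)
      qed
      define a where "a = L + \<eta>"
      define a' where "a' = a * (1 + \<eta>)"
      have a0: "0 < a" unfolding a_def using L0 \<eta>0 by simp
      have a'0: "0 < a'" unfolding a'_def using a0 \<eta>0 by simp
      have "M_const < ereal a" unfolding real a_def using \<eta>0 by simp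
      then have "\<forall>\<^sub>F t in sequentially. F t < ereal a" unfolding Mdef by (rule Limsup_lessD)
      then obtain T1 where T1: "\<And>t. T1 \<le> t \<Longrightarrow> F t < ereal a" unfolding eventually_sequentially by blast
      define T0 where "T0 = max T1 1"
      have HM: "log 2 (real (ramsey s t)) \<le> a * sqrt (real s * real t)"
        if st: "T0 \<le> t" "1 \<le> s" "s \<le> t" for s t
      proof -
        have "ereal (Max (tm t ` {1..t})) < ereal a" using T1[of t] st unfolding T0_def F_def by simp
        then have "tm t s < a" using tmle[OF st(2,3)] by simp
        moreover have "0 < sqrt (real s * real t)" using st by simp
        ultimately show ?thesis unfolding tm_def by (simp add: divide_less_eq less_imp_le)
      qed
      define K where "K = nat \<lceil>1 / \<eta>\<rceil> + T0 + 1"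
      have K: "T0 \<le> K" "1 \<le> K" unfolding K_def by auto
      have Kgt: "1 / \<eta> < real K" unfolding K_def by linarith
      have Kpos: "0 < real K" using K by simp
      have invK: "1 / real K < \<eta>" using Kgt \<eta>0 Kpos by (simp add: field_simps)
      define c where "c = a * (1 + 1 / real K) / a'"
      have ceq: "c = (1 + 1 / real K) / (1 + \<eta>)" unfolding c_def a'_def using a0 by simp
      have c1: "c < 1" unfolding ceq using \<eta>0 invK by simp
      have a'sq: "a'^2 \<le> L^2 + \<epsilon> / 2"
      proof -
        have ee: "a' = L + L * \<eta> + \<eta> + \<eta> * \<eta>" unfolding a'_def a_def by (simp add: algebra_simps)
        have "\<eta> * \<eta> \<le> \<eta> * 1" using \<eta>1 \<eta>0 by (intro mult_left_mono) auto
        then have e1: "a' \<le> L + \<eta> * (L + 2)" unfolding ee by (simp add: algebra_simps)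
        have "a'^2 \<le> (L + \<eta> * (L + 2))^2" using e1 a'0 by (intro power_mono) auto
        also have "\<dots> = L^2 + \<eta> * (2 * L * (L + 2)) + \<eta> * (\<eta> * (L+2)^2)"
          by (simp add: power2_eq_square algebra_simps)
        also have "\<dots> \<le> L^2 + \<eta> * (2 * (L+2)^2) + \<eta> * (L+2)^2"
        proof -
          have "2 * L * (L + 2) \<le> 2 * (L+2)^2" using L0 by (simp add: power2_eq_square)
          then have "\<eta> * (2 * L * (L + 2)) \<le> \<eta> * (2 * (L+2)^2)" using \<eta>0 by (intro mult_left_mono) auto
          moreover have "\<eta> * (L+2)^2 \<le> (L+2)^2" using \<eta>1 L2 by simp
          then have "\<eta> * (\<eta> * (L+2)^2) \<le> \<eta> * (L+2)^2" using \<eta>0 by (intro mult_left_mono) auto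
          ultimately show ?thesis by linarith
        qed
        also have "\<dots> = L^2 + \<eta> * (6 * (L+2)^2) / 2" by (simp add: algebra_simps)
        also have "\<dots> \<le> L^2 + \<epsilon> / 2" using \<eta>\<epsilon> by simp
        finally show ?thesis .
      qed
      define lg where "lg = (\<lambda>n::nat. log 2 (real n))"
      define B where "B = (\<lambda>n::nat. ((lg n)^2 / a'^2 + real K + 2) ^ K + real n powr c)"
      have lim1: "(\<lambda>n::nat. (log 2 (real n))^2 / real n * (((log 2 (real n))^2 / a'^2 + real K + 2) ^ K)) \<longlonglongrightarrow> 0"
        using a'0 by real_asymp
      have lim2: "(\<lambda>n::nat. (log 2 (real n))^2 / real n * (real n powr c)) \<longlonglongrightarrow> 0"
        using c1 by real_asymp
      have lim: "(\<lambda>n. (lg n)^2 / real n * B n) \<longlonglongrightarrow> 0"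
        using tendsto_add[OF lim1 lim2] unfolding B_def lg_def by (simp add: distrib_left)
      have ev: "\<forall>\<^sub>F n in sequentially. (lg n)^2 / real n * B n < \<epsilon> / 2"
        by (rule order_tendstoD(2)[OF lim]) (use \<epsilon> in simp)
      have "\<forall>\<^sub>F n in sequentially. ereal (g_fun n) \<le> ereal (L^2 + \<epsilon>)"
        using ev eventually_ge_at_top[of 2]
      proof eventually_elim
        case (elim n)
        have l1: "1 \<le> lg n" using elim(2) unfolding lg_def by simp
        have npos: "0 < real n" using elim(2) by simp
        have fb: "f_ratio n \<le> a'^2 * real n / (lg n)^2 + B n"
          unfolding lg_def B_def c_def using main_bound[OF a0 a'0 K HM elim(2)] by simp
        have "g_fun n = (lg n)^2 / real n * f_ratio n" unfolding g_fun_def lg_def by simp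
        also have "\<dots> \<le> (lg n)^2 / real n * (a'^2 * real n / (lg n)^2 + B n)"
          using fb npos by (intro mult_left_mono) auto
        also have "\<dots> = a'^2 + (lg n)^2 / real n * B n" using l1 npos by (simp add: field_simps)
        also have "\<dots> \<le> L^2 + \<epsilon>" using a'sq elim(1) by linarith
        finally show ?case by simp
      qed
      then have "limsup (\<lambda>n. ereal (g_fun n)) \<le> ereal (L^2 + \<epsilon>)" by (rule Limsup_bounded)
      then show "limsup (\<lambda>n. ereal (g_fun n)) \<le> ereal (L^2) + ereal \<epsilon>" by simp
    qed
  qed
qed

end
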